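(* Let $L$ be a positive integer and $A\in\mathbb{Z}_L^{2\times 2}$. Then there exist $s_0,s_1\in\mathbb{Z}_L$, a diagonal matrix $D\in\mathbb{Z}_L^{2\times2}$ and a matrix $V\in\mathbb{Z}_L^{2\times2}$ with $\det(V)=\pm1$ in $\mathbb{Z}_L$, such that $$A=U_{s_0,s_1}DV,\qquad\text{where } U_{s_0,s_1}=S_{-s_1}F^{-1}S_{s_0}F=\begin{pmatrix}1&-s_0\\-s_1&s_0s_1+1\end{pmatrix}.$$
   Context: All matrix arithmetic is modulo $L$. $F=\begin{pmatrix}0&-1\\1&0\end{pmatrix}$ and, for $c\in\mathbb{Z}_L$, $S_c=\begin{pmatrix}1&0\\c&1\end{pmatrix}$. *)

theory Defs
  imports "HOL-Analysis.Analysis" "HOL-Number_Theory.Cong"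
begin

text \<open>Matrices over Z_L are represented by integer matrices (int^2^2),
  with equality in Z_L meaning entrywise congruence modulo L.\<close>

definition mat2 :: "int \<Rightarrow> int \<Rightarrow> int \<Rightarrow> int \<Rightarrow> int^2^2" where
  "mat2 a b c d = (\<chi> i j. if i = 1 then (if j = 1 then a else b)
                           else (if j = 1 then c else d))"

definition cong_mat :: "int \<Rightarrow> int^2^2 \<Rightarrow> int^2^2 \<Rightarrow> bool" where
  "cong_mat L A B \<longleftrightarrow> (\<forall>i j. [A $ i $ j = B $ i $ j] (mod L))"

definition Fm :: "int^2^2" where "Fm = mat2 0 (-1) 1 0"

definition Fm_inv :: "int^2^2" where "Fm_inv = mat2 0 1 (-1) 0"

definition Sm :: "int \<Rightarrow> int^2^2" where "Sm c = mat2 1 0 c 1"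

definition Um :: "int \<Rightarrow> int \<Rightarrow> int^2^2" where
  "Um s0 s1 = Sm (-s1) ** Fm_inv ** Sm s0 ** Fm"

definition diag_mod :: "int \<Rightarrow> int^2^2 \<Rightarrow> bool" where
  "diag_mod L D \<longleftrightarrow> [D $ 1 $ 2 = 0] (mod L) \<and> [D $ 2 $ 1 = 0] (mod L)"

end

theory Submission imports Defs "HOL-Computational_Algebra.Primes" begin

lemma SR:
  fixes x y z :: int
  assumes x: "x \<noteq> 0" and g: "gcd (gcd x y) z = 1"
  shows "\<exists>k. coprime (y + k*z) x"
proof -
  define S where "S = prime_factors x \<inter> {p. \<not> p dvd y}"
  define k where "k = \<Prod>S"
  have fin: "finite S" unfolding S_def by auto
  have "coprime (y + k*z) x"
  proof (rule ccontr)
    assume "\<not> coprime (y + k*z) x"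
    then have "\<bar>gcd (y + k*z) x\<bar> \<noteq> 1" by (simp add: coprime_iff_gcd_eq_1)
    then obtain r where r: "prime r" "r dvd gcd (y + k*z) x" using prime_factor_int by blast
    then have r1: "r dvd y + k*z" and r2: "r dvd x" by auto
    show False
    proof (cases "r dvd y")
      case True
      have "\<not> r dvd z"
      proof
        assume "r dvd z"
        then have "r dvd gcd (gcd x y) z" using True r2 by simp
        then have "r dvd 1" using g by simp
        then show False using r(1) not_prime_unit by blast
      qed
      moreover have "\<not> r dvd k"
      proof
        assume "r dvd k"
        then obtain p where p: "p \<in> S" "r dvd p" unfolding k_def
          using prime_dvd_prod_iff[OF fin r(1), of id] by auto
        then have "prime p" "\<not> p dvd y" unfolding S_def by (auto simp: in_prime_factors_iff)
        then have "r = p" using p(2) r(1) primes_dvd_imp_eq by blast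
        then show False using True \<open>\<not> p dvd y\<close> by simp
      qed
      ultimately have "\<not> r dvd k*z" using r(1) prime_dvd_mult_iff by blast
      moreover have "r dvd k*z" using r1 True by (metis add_diff_cancel_left' dvd_diff)
      ultimately show False by blast
    next
      case False
      then have "r \<in> S" unfolding S_def using r x by (auto simp: in_prime_factors_iff)
      then have "r dvd k" unfolding k_def using dvd_prodI[OF fin \<open>r \<in> S\<close>, of "\<lambda>x. x"] by simp
      then have "r dvd k*z" by simp
      then have "r dvd y" using r1 by (metis add_diff_cancel_right' dvd_diff)
      then show False using False by simp
    qed
  qed
  then show ?thesis by blast
qed

lemma mat2_nth[simp]:
  "mat2 a b c d $ 1 $ 1 = a" "mat2 a b c d $ 1 $ 2 = b"
  "mat2 a b c d $ 2 $ 1 = c" "mat2 a b c d $ 2 $ 2 = d"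
  by (simp_all add: mat2_def)

lemma mat2_eta: "M = mat2 (M$1$1) (M$1$2) (M$2$1) (M$2$2)"
  by (simp add: vec_eq_iff forall_2)

lemma mat2_mult[simp]:
  "mat2 a b c d ** mat2 a' b' c' d' =
   mat2 (a * a'+b * c') (a * b'+b * d') (c * a'+d * c') (c * b'+d * d')"
  by (simp add: vec_eq_iff forall_2 matrix_matrix_mult_def sum_2)

lemma det_mat2[simp]: "det (mat2 a b c d) = a * d - b * c"
  by (simp add: det_2)

lemma mat2_one: "mat2 1 0 0 1 = (mat 1 :: int^2^2)"
  by (simp add: vec_eq_iff forall_2 mat_def)

lemma cong_mat_mat2:
  "cong_mat L (mat2 a b c d) (mat2 a' b' c' d') \<longleftrightarrow>
   [a = a'] (mod L) \<and> [b = b'] (mod L) \<and> [c = c'] (mod L) \<and> [d = d'] (mod L)"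
  by (simp add: cong_mat_def forall_2)

lemma cong_mat_mult:
  assumes "cong_mat L A A'" "cong_mat L B B'"
  shows "cong_mat L (A ** B) (A' ** B')"
  using assms unfolding cong_mat_def matrix_matrix_mult_def
  by (auto intro!: cong_sum cong_mult)

lemma cong_mat_trans: "cong_mat L A B \<Longrightarrow> cong_mat L B C \<Longrightarrow> cong_mat L A C"
  unfolding cong_mat_def using cong_trans by blast

lemma cong_mat_sym: "cong_mat L A B \<Longrightarrow> cong_mat L B A"
  unfolding cong_mat_def using cong_sym by blast

lemma cong_mat_refl: "cong_mat L A A"
  unfolding cong_mat_def by simp

lemma Um_eq: "Um s0 s1 = mat2 1 (-s0) (-s1) (s0* s1+1)"
  by (simp add: Um_def Sm_def Fm_def Fm_inv_def algebra_simps)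

lemma SNF0:
  fixes a b c d :: int
  shows "\<exists>P Q h n. det P = 1 \<and> det Q = 1 \<and> h dvd n \<and> P ** mat2 a b c d ** Q = mat2 h 0 0 n"
proof (cases "gcd a b = 0")
  case True
  then have ab: "a = 0" "b = 0" by auto
  show ?thesis
  proof (cases "gcd c d = 0")
    case True
    then have "c = 0" "d = 0" by auto
    then show ?thesis using ab
      by (intro exI[of _ "mat2 1 0 0 1"] exI[of _ "mat2 1 0 0 1"] exI[of _ 0]) simp
  next
    case False
    define G where "G = gcd c d"
    have GG: "G \<noteq> 0" using False G_def by simp
    obtain u v where uv: "u * c + v * d = G" using bezout_int G_def by blast
    obtain c1 where c1: "c = G * c1" using gcd_dvd1[of c d] G_def by (metis dvdE)
    obtain d1 where d1: "d = G * d1" using gcd_dvd2[of c d] G_def by (metis dvdE)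
    have "G * (u * c1 + v * d1) = G * 1" using uv by (simp add: c1 d1 algebra_simps)
    then have e: "u * c1 + v * d1 = 1" using GG by simp
    have x1: "c * u + d * v = G" by (metis uv mult.commute)
    have x2: "d * c1 - c * d1 = 0" by (simp add: c1 d1 algebra_simps)
    have "mat2 0 1 (-1) 0 ** mat2 a b c d ** mat2 u (-d1) v c1 = mat2 (c * u + d * v) (d * c1 - c * d1) 0 0"
      using ab by simp
    then have "mat2 0 1 (-1) 0 ** mat2 a b c d ** mat2 u (-d1) v c1 = mat2 (G) 0 0 0"
      using x1 x2 by simp
    then show ?thesis using e
      by (intro exI[of _ "mat2 0 1 (-1) 0"] exI[of _ "mat2 u (-d1) v c1"] exI[of _ "G"] exI[of _ 0])
        (simp add: algebra_simps)
  qed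
next
  case False
  define g1 where "g1 = gcd a b"
  have g1: "g1 \<noteq> 0" using False g1_def by simp
  obtain u v where uv: "u * a + v * b = g1" using bezout_int g1_def by blast
  obtain a1 where a1: "a = g1 * a1" using g1_def gcd_dvd1[of a b] by (metis dvdE)
  obtain b1 where b1: "b = g1 * b1" using g1_def gcd_dvd2[of a b] by (metis dvdE)
  have "g1 * (u * a1 + v * b1) = g1 * 1" using uv a1 b1 by (simp add: algebra_simps)
  then have e1: "u * a1 + v * b1 = 1" using g1 by simp
  define c' where "c' = c * u + d * v"
  define d' where "d' = -c * b1 + d * a1"
  have st1: "mat2 a b c d ** mat2 u (-b1) v a1 = mat2 g1 0 c' d'"
    using uv a1 b1 unfolding c'_def d'_def by (simp add: algebra_simps)
  define g where "g = gcd (gcd g1 c') d'"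
  have gpos: "g > 0" using g1 unfolding g_def by simp
  obtain x1 where x1: "g1 = g * x1" unfolding g_def by (meson dvd_trans gcd_dvd1 dvdE)
  obtain y1 where y1: "c' = g * y1" unfolding g_def by (meson dvd_trans gcd_dvd1 gcd_dvd2 dvdE)
  obtain z1 where z1: "d' = g * z1" unfolding g_def by (meson gcd_dvd2 dvdE)
  have "g * gcd (gcd x1 y1) z1 = g * 1"
  proof -
    have "g * gcd (gcd x1 y1) z1 = gcd (gcd (g * x1) (g * y1)) (g * z1)"
      using gpos by (metis abs_of_pos gcd_mult_distrib_int)
    also have "\<dots> = g" by (simp only: x1[symmetric] y1[symmetric] z1[symmetric]) (simp add: g_def)
    finally show ?thesis by simp
  qed
  then have gg: "gcd (gcd x1 y1) z1 = 1" using gpos by simp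
  have x1nz: "x1 \<noteq> 0" using x1 g1 by auto
  obtain k where k: "coprime (y1 + k * z1) x1" using SR[OF x1nz gg] by blast
  define w1 where "w1 = y1 + k * z1"
  obtain s t where st: "s * x1 + t * w1 = 1"
    using bezout_int[of x1 w1] k unfolding w1_def by (metis coprime_commute coprime_iff_gcd_eq_1)
  have st2: "mat2 g1 0 c' d' ** mat2 1 0 k 1 = mat2 g1 0 (g * w1) d'"
    using y1 z1 unfolding w1_def by (simp add: algebra_simps)
  have st3: "mat2 s t (-w1) x1 ** mat2 g1 0 (g * w1) d' ** mat2 1 (-t * z1) 0 1 = mat2 g 0 0 (x1 * g * z1)"
  proof -
    have "s * g1 + t * (g * w1) = g"
      using st x1 by (metis mult.commute mult.left_commute distrib_left mult_1_right)
    then show ?thesis using x1 z1 by (simp add: algebra_simps)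
  qed
  have "mat2 s t (-w1) x1 ** mat2 a b c d ** (mat2 u (-b1) v a1 ** mat2 1 0 k 1 ** mat2 1 (-t * z1) 0 1)
        = mat2 g 0 0 (x1 * g * z1)"
  proof -
    have "mat2 s t (-w1) x1 ** mat2 a b c d ** (mat2 u (-b1) v a1 ** mat2 1 0 k 1 ** mat2 1 (-t * z1) 0 1)
      = mat2 s t (-w1) x1 ** (((mat2 a b c d ** mat2 u (-b1) v a1) ** mat2 1 0 k 1) ** mat2 1 (-t * z1) 0 1)"
      by (simp only: matrix_mul_assoc)
    also have "\<dots> = mat2 s t (-w1) x1 ** (mat2 g1 0 (g * w1) d' ** mat2 1 (-t * z1) 0 1)"
      by (simp only: st1 st2)
    also have "\<dots> = mat2 g 0 0 (x1 * g * z1)" by (metis st3 matrix_mul_assoc)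
    finally show ?thesis .
  qed
  moreover have "det (mat2 s t (-w1) x1) = 1" using st by (simp add: algebra_simps)
  moreover have "det (mat2 u (-b1) v a1 ** mat2 1 0 k 1 ** mat2 1 (-t * z1) 0 1) = 1"
    using e1 by (simp only: det_mul det_mat2) (simp add: algebra_simps)
  moreover have "g dvd x1 * g * z1" by simp
  ultimately show ?thesis by blast
qed

lemma SNF:
  fixes A :: "int^2^2"
  shows "\<exists>R T e1 e2. det R = 1 \<and> det T = 1 \<and> e2 dvd e1 \<and> A = R ** mat2 e1 0 0 e2 ** T"
proof -
  obtain P Q h n where PQ: "det P = 1" "det Q = 1" "h dvd n"
    "P ** A ** Q = mat2 h 0 0 n"
    using SNF0[of "A$1$1" "A$1$2" "A$2$1" "A$2$2"] mat2_eta[of A] by metis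
  define aP where "aP = mat2 (P$2$2) (-P$1$2) (-P$2$1) (P$1$1)"
  define aQ where "aQ = mat2 (Q$2$2) (-Q$1$2) (-Q$2$1) (Q$1$1)"
  have "aP ** P = mat 1"
    using PQ(1) unfolding aP_def mat2_one[symmetric] det_2
    by (subst (2) mat2_eta[of P]) (simp add: algebra_simps)
  moreover have "Q ** aQ = mat 1"
    using PQ(2) unfolding aQ_def mat2_one[symmetric] det_2
    by (subst (1) mat2_eta[of Q]) (simp add: algebra_simps)
  ultimately have "A = aP ** (P ** A ** Q) ** aQ"
    by (metis matrix_mul_assoc matrix_mul_lid matrix_mul_rid)
  also have "\<dots> = (aP ** mat2 0 (-1) 1 0) ** mat2 n 0 0 h ** (mat2 0 1 (-1) 0 ** aQ)"
  proof -
    have F: "mat2 0 (-1) 1 0 ** mat2 n 0 0 h ** mat2 0 1 (-1) 0 = mat2 h 0 0 n" by simp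
    show ?thesis by (metis PQ(4) F matrix_mul_assoc)
  qed
  finally have "A = (aP ** mat2 0 (-1) 1 0) ** mat2 n 0 0 h ** (mat2 0 1 (-1) 0 ** aQ)" .
  moreover have "det (aP ** mat2 0 (-1) 1 0) = 1"
    using PQ(1) unfolding aP_def by (simp add: det_mul det_2 algebra_simps)
  moreover have "det (mat2 0 1 (-1) 0 ** aQ) = 1"
    using PQ(2) unfolding aQ_def by (simp add: det_mul det_2 algebra_simps)
  ultimately show ?thesis using PQ(3) by blast
qed

theorem theorem3p5:
  fixes L :: int and A :: "int^2^2"
  assumes "L > 0"
  shows "\<exists>s0 s1 :: int. \<exists>D V :: int^2^2.
           diag_mod L D \<and>
           ([det V = 1] (mod L) \<or> [det V = -1] (mod L)) \<and>
           cong_mat L A (Um s0 s1 ** D ** V) \<and>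
           cong_mat L (Um s0 s1) (mat2 1 (-s0) (-s1) (s0 * s1 + 1))"
proof -
  obtain R T e1 e2 where RT: "det R = 1" "det T = 1" "e2 dvd e1" "A = R ** mat2 e1 0 0 e2 ** T"
    using SNF by blast
  obtain m where m: "e1 = e2 * m" using RT(3) by blast
  define p where "p = R$1$1"
  define q where "q = R$1$2"
  define r where "r = R$2$1"
  define s where "s = R$2$2"
  have R: "R = mat2 p q r s" unfolding p_def q_def r_def s_def by (rule mat2_eta)
  have dR: "p* s - q * r = 1" using RT(1) R by simp
  have "gcd p q dvd 1" using dR by (metis dvd_diff dvd_mult2 gcd_dvd1 gcd_dvd2 mult.commute)
  then have "gcd (gcd L p) q = 1"
    by (metis gcd.assoc gcd.commute gcd_dvd2 dvd_trans is_unit_gcd gcd_nat.extremum_uniqueI is_unit_gcd_iff)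
  then obtain c where c: "coprime (p + c * q) L" using SR[of L p q] assms by auto
  define u where "u = p + c * q"
  obtain w y where wy: "w * u + y * L = 1"
    using bezout_int[of u L] c unfolding u_def by (metis coprime_iff_gcd_eq_1)
  define D where "D = mat2 e1 0 0 e2"
  define V where "V = mat2 u 0 0 w ** mat2 1 0 (-c * m) 1 ** T"
  define s0 where "s0 = -(q * u)"
  define s1 where "s1 = -((r+s * c) * w)"
  define R2 where "R2 = mat2 (u * w) (q * u) ((r+s * c) * w) (s * u)"
  have uw: "[u * w = 1] (mod L)"
  proof -
    have "u * w - 1 = L * (-y)" using wy by (simp add: algebra_simps)
    then show ?thesis by (simp add: cong_iff_dvd_diff)
  qed
  have detV: "[det V = 1] (mod L)"
    using uw RT(2) unfolding V_def by (simp add: det_mul)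
  have key: "R2 ** D ** (mat2 u 0 0 w ** mat2 1 0 (-c * m) 1) = mat2 (u * w) 0 0 (u * w) ** R ** D"
    unfolding R2_def D_def R u_def m by (simp add: algebra_simps)
  have eqA: "R2 ** D ** V = mat2 (u * w) 0 0 (u * w) ** A"
    unfolding V_def RT(4) D_def[symmetric]
    by (metis key matrix_mul_assoc)
  have c1: "cong_mat L (Um s0 s1) R2"
  proof -
    have "s0* s1+1 - s * u = L * (-(y * (s * u-1)))"
      unfolding s0_def s1_def using dR wy unfolding u_def by algebra
    then have "[s0* s1+1 = s * u] (mod L)" by (simp add: cong_iff_dvd_diff)
    then show ?thesis unfolding Um_eq R2_def cong_mat_mat2 s0_def s1_def
      using uw by (simp add: cong_sym)
  qed
  have c2: "cong_mat L (mat2 (u * w) 0 0 (u * w) ** A) A"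
  proof -
    have "\<And>z. [u * w * z = z] (mod L)" using cong_scalar_right[OF uw] by simp
    obtain a11 a12 a21 a22 where "A = mat2 a11 a12 a21 a22" using mat2_eta by blast
    then show ?thesis using \<open>\<And>z. [u * w * z = z] (mod L)\<close> by (simp add: cong_mat_mat2)
  qed
  have "cong_mat L (Um s0 s1 ** D ** V) A"
    using cong_mat_trans[OF cong_mat_mult[OF cong_mat_mult[OF c1 cong_mat_refl] cong_mat_refl]]
      eqA c2 by simp
  then have "cong_mat L A (Um s0 s1 ** D ** V)" by (rule cong_mat_sym)
  moreover have "diag_mod L D" unfolding D_def diag_mod_def by simp
  moreover have "cong_mat L (Um s0 s1) (mat2 1 (-s0) (-s1) (s0 * s1 + 1))"
    unfolding Um_eq by (rule cong_mat_refl)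
  ultimately show ?thesis using detV by blast
qed

end
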